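(* Let $n\ge 5$ and let $L$ be a Latin square of order $n$ with horizontal and vertical difference matrices $H=(h_{i,j})$ and $V=(v_{i,j})$. If rows $i$ and $i+1$ of $H$ are equal, then all entries of row $i$ of $V$ are equal. If columns $j$ and $j+1$ of $V$ are equal, then all entries of column $j$ of $H$ are equal. Moreover, $L$ is a row product if and only if every row of $H$ equals the first row of $H$, which holds if and only if every column of $V$ equals the first column of $V$.
   Context: Symbols are $[1,n]$. A Latin square of order $n$ is an $n\times n$ matrix $(m_{i,j})$ over $[1,n]$ with each symbol exactly once in every row and column. $H$ is the $n\times(n-1)$ matrix with $h_{i,j}\in[0,n-1]$, $h_{i,j}\equiv m_{i,j+1}-m_{i,j}\pmod n$; $V$ is the $(n-1)\times n$ matrix with $v_{i,j}\in[0,n-1]$, $v_{i,j}\equiv m_{i+1,j}-m_{i,j}\pmod n$. The difference row of a Latin row $(s_1,\dots,s_n)$ is $(h_1,\dots,h_{n-1})$ with $h_j\equiv s_{j+1}-s_j\pmod n$. A row product is a Latin square obtained by adding a constant mod $n$ to all entries of $\mathrm{prod}(d,d')$, the $n\times n$ matrix with $1$ in cell $(1,1)$ whose horizontal difference matrix has every row equal to a difference row $d$ and whose vertical difference matrix has every column equal to a difference row $d'$. *)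

theory Defs
  imports Main
begin

text \<open>Matrices are functions nat => nat => int, indexed 1-based by rows i and columns j;
  symbols are the integers 1..n.\<close>

definition latin_row :: "nat \<Rightarrow> (nat \<Rightarrow> int) \<Rightarrow> bool" where
  "latin_row n s \<longleftrightarrow> bij_betw s {1..n} {1..int n}"

definition latin_square :: "nat \<Rightarrow> (nat \<Rightarrow> nat \<Rightarrow> int) \<Rightarrow> bool" where
  "latin_square n M \<longleftrightarrow>
     (\<forall>i\<in>{1..n}. bij_betw (\<lambda>j. M i j) {1..n} {1..int n}) \<and>
     (\<forall>j\<in>{1..n}. bij_betw (\<lambda>i. M i j) {1..n} {1..int n})"

text \<open>Horizontal difference matrix (n x (n-1)) and vertical difference matrix ((n-1) x n),
  entries in [0,n-1].\<close>
definition hdiff :: "nat \<Rightarrow> (nat \<Rightarrow> nat \<Rightarrow> int) \<Rightarrow> nat \<Rightarrow> nat \<Rightarrow> int" where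
  "hdiff n M i j = (M i (j+1) - M i j) mod int n"

definition vdiff :: "nat \<Rightarrow> (nat \<Rightarrow> nat \<Rightarrow> int) \<Rightarrow> nat \<Rightarrow> nat \<Rightarrow> int" where
  "vdiff n M i j = (M (i+1) j - M i j) mod int n"

definition is_diff_row :: "nat \<Rightarrow> (nat \<Rightarrow> int) \<Rightarrow> bool" where
  "is_diff_row n d \<longleftrightarrow> (\<exists>s. latin_row n s \<and>
      (\<forall>j\<in>{1..n-1}. d j = (s (j+1) - s j) mod int n))"

definition is_prod :: "nat \<Rightarrow> (nat \<Rightarrow> int) \<Rightarrow> (nat \<Rightarrow> int) \<Rightarrow> (nat \<Rightarrow> nat \<Rightarrow> int) \<Rightarrow> bool" where
  "is_prod n d d' P \<longleftrightarrow>
     (\<forall>i\<in>{1..n}. \<forall>j\<in>{1..n}. P i j \<in> {1..int n}) \<and> P 1 1 = 1 \<and>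
     (\<forall>i\<in>{1..n}. \<forall>j\<in>{1..n-1}. hdiff n P i j = d j) \<and>
     (\<forall>i\<in>{1..n-1}. \<forall>j\<in>{1..n}. vdiff n P i j = d' i)"

text \<open>L is a row product: obtained from some prod(d,d') by adding a constant c mod n
  (representatives taken in [1,n]).\<close>
definition row_product :: "nat \<Rightarrow> (nat \<Rightarrow> nat \<Rightarrow> int) \<Rightarrow> bool" where
  "row_product n L \<longleftrightarrow> (\<exists>d d' P c. is_diff_row n d \<and> is_diff_row n d' \<and> is_prod n d d' P \<and>
      (\<forall>i\<in>{1..n}. \<forall>j\<in>{1..n}. L i j = (P i j + c - 1) mod int n + 1))"

end

theory Submission
  imports Defs
begin

lemma key_cong:
  assumes "((a'::int) - a) mod m = (b' - b) mod m"
  shows "(b' - a') mod m = (b - a) mod m"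
proof -
  from assms have "m dvd (a'-a)-(b'-b)" by (simp add: mod_eq_dvd_iff)
  moreover have "(b'-a')-(b-a) = -((a'-a)-(b'-b))" by simp
  ultimately have "m dvd (b'-a')-(b-a)" by (metis dvd_minus_iff)
  then show ?thesis by (simp add: mod_eq_dvd_iff)
qed

lemma shift_mod: "(((a::int) mod m + 1) - (b mod m + 1)) mod m = (a - b) mod m"
  by (simp add: mod_diff_eq)
lemma back_mod: assumes "(x::int) \<in> {1..m}" shows "((x - y) mod m + 1 + (y - 1) - 1) mod m + 1 = x"
proof -
  have "((x - y) mod m + 1 + (y - 1) - 1) mod m = ((x - y) mod m + (y - 1)) mod m" by (simp add: algebra_simps)
  also have "\<dots> = (x - y + (y - 1)) mod m" by (simp add: mod_add_left_eq)
  also have "\<dots> = x - 1" using assms by simp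
  finally show ?thesis by simp
qed

lemma part1:
  assumes "\<forall>j\<in>{1..n-1}. hdiff n L i j = hdiff n L (i+1) j"
  shows "\<forall>j\<in>{1..n}. vdiff n L i j = vdiff n L i 1"
proof -
  have "\<forall>k. k+1 \<le> n \<longrightarrow> vdiff n L i (k+1) = vdiff n L i 1"
  proof
    fix k show "k+1 \<le> n \<longrightarrow> vdiff n L i (k+1) = vdiff n L i 1"
    proof (induction k)
      case 0 then show ?case by simp
    next
      case (Suc k)
      show ?case
      proof
        assume a: "Suc k + 1 \<le> n"
        then have "k+1 \<in> {1..n-1}" by auto
        then have "hdiff n L i (k+1) = hdiff n L (i+1) (k+1)" using assms by blast
        then have "vdiff n L i (k+1+1) = vdiff n L i (k+1)"
          unfolding hdiff_def vdiff_def by (rule key_cong)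
        then show "vdiff n L i (Suc k+1) = vdiff n L i 1" using Suc a by simp
      qed
    qed
  qed
  then show ?thesis
  proof (intro ballI)
    fix j assume A: "\<forall>k. k+1 \<le> n \<longrightarrow> vdiff n L i (k+1) = vdiff n L i 1" and j: "j \<in> {1..n}"
    then have "j - 1 + 1 \<le> n" "j - 1 + 1 = j" by auto
    then show "vdiff n L i j = vdiff n L i 1" using A by metis
  qed
qed

lemma part2:
  assumes "\<forall>i\<in>{1..n-1}. vdiff n L i j = vdiff n L i (j+1)"
  shows "\<forall>i\<in>{1..n}. hdiff n L i j = hdiff n L 1 j"
proof -
  have "\<forall>k. k+1 \<le> n \<longrightarrow> hdiff n L (k+1) j = hdiff n L 1 j"
  proof
    fix k show "k+1 \<le> n \<longrightarrow> hdiff n L (k+1) j = hdiff n L 1 j"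
    proof (induction k)
      case 0 then show ?case by simp
    next
      case (Suc k)
      show ?case
      proof
        assume a: "Suc k + 1 \<le> n"
        then have "k+1 \<in> {1..n-1}" by auto
        then have "vdiff n L (k+1) j = vdiff n L (k+1) (j+1)" using assms by blast
        then have "hdiff n L (k+1+1) j = hdiff n L (k+1) j"
          unfolding hdiff_def vdiff_def by (rule key_cong)
        then show "hdiff n L (Suc k+1) j = hdiff n L 1 j" using Suc a by simp
      qed
    qed
  qed
  then show ?thesis
  proof (intro ballI)
    fix i assume A: "\<forall>k. k+1 \<le> n \<longrightarrow> hdiff n L (k+1) j = hdiff n L 1 j" and j: "i \<in> {1..n}"
    then have "i - 1 + 1 \<le> n" "i - 1 + 1 = i" by auto
    then show "hdiff n L i j = hdiff n L 1 j" using A by metis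
  qed
qed

theorem mainTheorem15:
  fixes n :: nat and L :: "nat \<Rightarrow> nat \<Rightarrow> int"
  assumes "n \<ge> 5" and "latin_square n L"
  shows "(\<forall>i. 1 \<le> i \<and> i + 1 \<le> n \<and> (\<forall>j\<in>{1..n-1}. hdiff n L i j = hdiff n L (i+1) j)
            \<longrightarrow> (\<forall>j\<in>{1..n}. \<forall>j'\<in>{1..n}. vdiff n L i j = vdiff n L i j'))
       \<and> (\<forall>j. 1 \<le> j \<and> j + 1 \<le> n \<and> (\<forall>i\<in>{1..n-1}. vdiff n L i j = vdiff n L i (j+1))
            \<longrightarrow> (\<forall>i\<in>{1..n}. \<forall>i'\<in>{1..n}. hdiff n L i j = hdiff n L i' j))
       \<and> (row_product n L \<longleftrightarrow> (\<forall>i\<in>{1..n}. \<forall>j\<in>{1..n-1}. hdiff n L i j = hdiff n L 1 j))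
       \<and> ((\<forall>i\<in>{1..n}. \<forall>j\<in>{1..n-1}. hdiff n L i j = hdiff n L 1 j) \<longleftrightarrow>
          (\<forall>i\<in>{1..n-1}. \<forall>j\<in>{1..n}. vdiff n L i j = vdiff n L i 1))"
proof -
  have P1: "\<forall>i. 1 \<le> i \<and> i + 1 \<le> n \<and> (\<forall>j\<in>{1..n-1}. hdiff n L i j = hdiff n L (i+1) j)
            \<longrightarrow> (\<forall>j\<in>{1..n}. \<forall>j'\<in>{1..n}. vdiff n L i j = vdiff n L i j')"
  proof (intro allI impI ballI)
    fix i j j' assume a: "1 \<le> i \<and> i + 1 \<le> n \<and> (\<forall>j\<in>{1..n-1}. hdiff n L i j = hdiff n L (i+1) j)"
      and "j \<in> {1..n}" "j' \<in> {1..n}"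
    then have "vdiff n L i j = vdiff n L i 1" "vdiff n L i j' = vdiff n L i 1"
      using part1[of n L i] by blast+
    then show "vdiff n L i j = vdiff n L i j'" by (rule trans_sym)
  qed
  have P2: "\<forall>j. 1 \<le> j \<and> j + 1 \<le> n \<and> (\<forall>i\<in>{1..n-1}. vdiff n L i j = vdiff n L i (j+1))
            \<longrightarrow> (\<forall>i\<in>{1..n}. \<forall>i'\<in>{1..n}. hdiff n L i j = hdiff n L i' j)"
  proof (intro allI impI ballI)
    fix j i i' assume a: "1 \<le> j \<and> j + 1 \<le> n \<and> (\<forall>i\<in>{1..n-1}. vdiff n L i j = vdiff n L i (j+1))"
      and "i \<in> {1..n}" "i' \<in> {1..n}"
    then have "hdiff n L i j = hdiff n L 1 j" "hdiff n L i' j = hdiff n L 1 j"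
      using part2[of n L j] by blast+
    then show "hdiff n L i j = hdiff n L i' j" by (rule trans_sym)
  qed
  have P4: "(\<forall>i\<in>{1..n}. \<forall>j\<in>{1..n-1}. hdiff n L i j = hdiff n L 1 j) \<longleftrightarrow>
          (\<forall>i\<in>{1..n-1}. \<forall>j\<in>{1..n}. vdiff n L i j = vdiff n L i 1)"
  proof
    assume H: "\<forall>i\<in>{1..n}. \<forall>j\<in>{1..n-1}. hdiff n L i j = hdiff n L 1 j"
    show "\<forall>i\<in>{1..n-1}. \<forall>j\<in>{1..n}. vdiff n L i j = vdiff n L i 1"
    proof (intro ballI)
      fix i j assume i: "i \<in> {1..n-1}" and j: "j \<in> {1..n}"
      have "\<forall>j\<in>{1..n-1}. hdiff n L i j = hdiff n L (i+1) j"
      proof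
        fix j assume j: "j \<in> {1..n-1}"
        have "i \<in> {1..n}" "i+1 \<in> {1..n}" using i by auto
        then have "hdiff n L i j = hdiff n L 1 j" "hdiff n L (i+1) j = hdiff n L 1 j"
          using H j by blast+
        then show "hdiff n L i j = hdiff n L (i+1) j" by (rule trans_sym)
      qed
      then show "vdiff n L i j = vdiff n L i 1" using part1 j by blast
    qed
  next
    assume V: "\<forall>i\<in>{1..n-1}. \<forall>j\<in>{1..n}. vdiff n L i j = vdiff n L i 1"
    show "\<forall>i\<in>{1..n}. \<forall>j\<in>{1..n-1}. hdiff n L i j = hdiff n L 1 j"
    proof (intro ballI)
      fix i j assume i: "i \<in> {1..n}" and j: "j \<in> {1..n-1}"
      have "\<forall>i\<in>{1..n-1}. vdiff n L i j = vdiff n L i (j+1)"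
      proof
        fix i assume i: "i \<in> {1..n-1}"
        have "j \<in> {1..n}" "j+1 \<in> {1..n}" using j by auto
        then have "vdiff n L i j = vdiff n L i 1" "vdiff n L i (j+1) = vdiff n L i 1"
          using V i by blast+
        then show "vdiff n L i j = vdiff n L i (j+1)" by (rule trans_sym)
      qed
      then show "hdiff n L i j = hdiff n L 1 j" using part2 i by blast
    qed
  qed
  have P3: "row_product n L \<longleftrightarrow> (\<forall>i\<in>{1..n}. \<forall>j\<in>{1..n-1}. hdiff n L i j = hdiff n L 1 j)"
  proof
    assume "row_product n L"
    then obtain d d' P c where pr: "is_prod n d d' P"
      and LP: "\<forall>i\<in>{1..n}. \<forall>j\<in>{1..n}. L i j = (P i j + c - 1) mod int n + 1"
      unfolding row_product_def by blast
    have hd: "hdiff n L i j = d j" if i: "i \<in> {1..n}" and j: "j \<in> {1..n-1}" for i j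
    proof -
      have "j+1 \<in> {1..n}" "j \<in> {1..n}" using j by auto
      then have "hdiff n L i j = (((P i (j+1) + c - 1) mod int n + 1) - ((P i j + c - 1) mod int n + 1)) mod int n"
        using LP i unfolding hdiff_def by simp
      also have "\<dots> = ((P i (j+1) + c - 1) - (P i j + c - 1)) mod int n"
        by (simp add: mod_diff_eq)
      also have "\<dots> = hdiff n P i j" unfolding hdiff_def by simp
      also have "\<dots> = d j" using pr i j unfolding is_prod_def by blast
      finally show ?thesis .
    qed
    show "\<forall>i\<in>{1..n}. \<forall>j\<in>{1..n-1}. hdiff n L i j = hdiff n L 1 j"
    proof (intro ballI)
      fix i j assume "i \<in> {1..n}" "j \<in> {1..n-1}"
      moreover have "(1::nat) \<in> {1..n}" using assms(1) by simp
      ultimately show "hdiff n L i j = hdiff n L 1 j" using hd by metis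
    qed
  next
    assume H: "\<forall>i\<in>{1..n}. \<forall>j\<in>{1..n-1}. hdiff n L i j = hdiff n L 1 j"
    with P4 have V: "\<forall>i\<in>{1..n-1}. \<forall>j\<in>{1..n}. vdiff n L i j = vdiff n L i 1" by blast
    have n0: "int n > 0" using assms(1) by simp
    have rng: "L i j \<in> {1..int n}" if "i \<in> {1..n}" "j \<in> {1..n}" for i j
      using assms(2) that unfolding latin_square_def bij_betw_def by blast
    define P where "P = (\<lambda>i j. (L i j - L 1 1) mod int n + 1)"
    define d where "d = (\<lambda>j. hdiff n L 1 j)"
    define d' where "d' = (\<lambda>i. vdiff n L i 1)"
    have 11: "(1::nat) \<in> {1..n}" using assms(1) by simp
    have dr: "is_diff_row n d" unfolding is_diff_row_def
    proof (intro exI conjI)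
      show "latin_row n (L 1)" using assms(2) 11 unfolding latin_square_def latin_row_def by blast
      show "\<forall>j\<in>{1..n - 1}. d j = (L 1 (j + 1) - L 1 j) mod int n"
        unfolding d_def hdiff_def by simp
    qed
    have dr': "is_diff_row n d'" unfolding is_diff_row_def
    proof (intro exI conjI)
      show "latin_row n (\<lambda>i. L i 1)" using assms(2) 11 unfolding latin_square_def latin_row_def by blast
      show "\<forall>j\<in>{1..n - 1}. d' j = (L (j + 1) 1 - L j 1) mod int n"
        unfolding d'_def vdiff_def by simp
    qed
    have hP: "hdiff n P i j = hdiff n L i j" for i j
      unfolding hdiff_def P_def shift_mod by simp
    have vP: "vdiff n P i j = vdiff n L i j" for i j
      unfolding vdiff_def P_def shift_mod by simp
    have ip: "is_prod n d d' P" unfolding is_prod_def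
    proof (intro conjI)
      show "\<forall>i\<in>{1..n}. \<forall>j\<in>{1..n}. P i j \<in> {1..int n}"
      proof (intro ballI)
        fix i j
        have "(L i j - L 1 1) mod int n < int n" using n0 by (rule pos_mod_bound)
        moreover have "0 \<le> (L i j - L 1 1) mod int n" using n0 by (rule pos_mod_sign)
        ultimately show "P i j \<in> {1..int n}" unfolding P_def by simp
      qed
      show "P 1 1 = 1" unfolding P_def by simp
      show "\<forall>i\<in>{1..n}. \<forall>j\<in>{1..n - 1}. hdiff n P i j = d j"
        unfolding d_def hP using H by blast
      show "\<forall>i\<in>{1..n - 1}. \<forall>j\<in>{1..n}. vdiff n P i j = d' i"
        unfolding d'_def vP using V by blast
    qed
    have LP: "\<forall>i\<in>{1..n}. \<forall>j\<in>{1..n}. L i j = (P i j + (L 1 1 - 1) - 1) mod int n + 1"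
    proof (intro ballI)
      fix i j assume "i \<in> {1..n}" "j \<in> {1..n}"
      then have r: "L i j \<in> {1..int n}" using rng by blast
      show "L i j = (P i j + (L 1 1 - 1) - 1) mod int n + 1"
        unfolding P_def using back_mod[OF r, of "L 1 1"] by simp
    qed
    show "row_product n L" unfolding row_product_def
      using dr dr' ip LP by blast
  qed
  show ?thesis using P1 P2 P3 P4 by (intro conjI)
qed

end
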